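(* For every $d\in\mathbb N$, the Hamming graph $H(d,3)$ has no quantum symmetry, i.e. $C(G_{aut}^+(H(d,3)))$ is commutative.
   Context: The Hamming graph $H(d,q)$ has vertex set $\{1,\dots,q\}^d$, two vertices being adjacent iff they differ in exactly one coordinate. For a finite simple undirected graph $\Gamma=(V,E)$ with $V=\{1,\dots,n\}$, $C(G_{aut}^+(\Gamma))$ is the universal unital $C^*$-algebra generated by $u_{ij}$, $1\le i,j\le n$, with relations: (R1) $u_{ij}=u_{ij}^*=u_{ij}^2$; (R2) $\sum_{l} u_{il}=1=\sum_{l} u_{li}$ for all $i$; (R3) $u_{ij}u_{kl}=u_{kl}u_{ij}=0$ whenever exactly one of $(i,k)\in E$, $(j,l)\in E$ holds. $\Gamma$ has no quantum symmetry if $C(G_{aut}^+(\Gamma))$ is commutative. *)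

theory Defs
  imports Complex_Main
begin

text \<open>Complex scalar multiplication is \<open>scaleC\<close>; the inherited real
  scalar multiplication is its restriction to real scalars.\<close>

class cstar_algebra = real_normed_algebra_1 + banach +
  fixes scaleC :: "complex \<Rightarrow> 'a \<Rightarrow> 'a"
    and adj :: "'a \<Rightarrow> 'a"
  assumes scaleC_add_right: "scaleC c (x + y) = scaleC c x + scaleC c y"
    and scaleC_add_left: "scaleC (b + c) x = scaleC b x + scaleC c x"
    and scaleC_scaleC: "scaleC b (scaleC c x) = scaleC (b * c) x"
    and scaleC_one: "scaleC 1 x = x"
    and scaleR_scaleC: "scaleR r x = scaleC (complex_of_real r) x"
    and norm_scaleC: "norm (scaleC c x) = cmod c * norm x"
    and mult_scaleC_left: "scaleC c x * y = scaleC c (x * y)"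
    and mult_scaleC_right: "x * scaleC c y = scaleC c (x * y)"
    and adj_adj: "adj (adj x) = x"
    and adj_add: "adj (x + y) = adj x + adj y"
    and adj_scaleC: "adj (scaleC c x) = scaleC (cnj c) (adj x)"
    and adj_mult: "adj (x * y) = adj y * adj x"
    and cstar_identity: "norm (adj x * x) = (norm x)\<^sup>2"

text \<open>\<open>qaut_rel V E u\<close>: the family \<open>u i j\<close> (i, j in the finite vertex set V) of elements
  of a C*-algebra satisfies the defining relations (R1)-(R3) of C(G_aut^+(Gamma)),
  where Gamma = (V, E) and E is the (symmetric, irreflexive) adjacency relation.\<close>

definition qaut_rel :: "'v set \<Rightarrow> ('v \<Rightarrow> 'v \<Rightarrow> bool) \<Rightarrow> ('v \<Rightarrow> 'v \<Rightarrow> 'a::cstar_algebra) \<Rightarrow> bool" where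
  "qaut_rel V E u \<longleftrightarrow>
     (\<forall>i\<in>V. \<forall>j\<in>V. adj (u i j) = u i j \<and> u i j * u i j = u i j) \<and>
     (\<forall>i\<in>V. (\<Sum>l\<in>V. u i l) = 1 \<and> (\<Sum>l\<in>V. u l i) = 1) \<and>
     (\<forall>i\<in>V. \<forall>j\<in>V. \<forall>k\<in>V. \<forall>l\<in>V. (E i k \<noteq> E j l) \<longrightarrow>
         u i j * u k l = 0 \<and> u k l * u i j = 0)"

definition hamming_vertices :: "nat \<Rightarrow> nat \<Rightarrow> nat list set" where
  "hamming_vertices d q = {x. length x = d \<and> set x \<subseteq> {1..q}}"

definition hamming_adj :: "nat \<Rightarrow> nat \<Rightarrow> nat list \<Rightarrow> nat list \<Rightarrow> bool" where
  "hamming_adj d q x y \<longleftrightarrow>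
     x \<in> hamming_vertices d q \<and> y \<in> hamming_vertices d q \<and>
     card {i. i < d \<and> x ! i \<noteq> y ! i} = 1"

end

theory Submission
  imports Defs
begin


definition Dif :: "nat \<Rightarrow> nat list \<Rightarrow> nat list \<Rightarrow> nat set" where
  "Dif d x y = {t. t < d \<and> x!t \<noteq> y!t}"

lemma vert_iff: "x \<in> hamming_vertices d 3 \<longleftrightarrow> length x = d \<and> (\<forall>t<d. 1 \<le> x!t \<and> x!t \<le> 3)"
  unfolding hamming_vertices_def by (auto simp: set_conv_nth)

lemma adj_iff: "hamming_adj d 3 x y \<longleftrightarrow> x \<in> hamming_vertices d 3 \<and> y \<in> hamming_vertices d 3 \<and>
   (\<exists>s<d. x!s \<noteq> y!s \<and> (\<forall>t<d. t \<noteq> s \<longrightarrow> x!t = y!t))"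
proof -
  have "card {i. i < d \<and> x ! i \<noteq> y ! i} = 1 \<longleftrightarrow> (\<exists>s<d. x!s \<noteq> y!s \<and> (\<forall>t<d. t \<noteq> s \<longrightarrow> x!t = y!t))"
  proof
    assume "card {i. i < d \<and> x ! i \<noteq> y ! i} = 1"
    then obtain s where s: "{i. i < d \<and> x ! i \<noteq> y ! i} = {s}" by (auto simp: card_1_singleton_iff)
    then have "s < d \<and> x!s \<noteq> y!s" by blast
    moreover have "\<forall>t<d. t \<noteq> s \<longrightarrow> x!t = y!t" using s by blast
    ultimately show "\<exists>s<d. x!s \<noteq> y!s \<and> (\<forall>t<d. t \<noteq> s \<longrightarrow> x!t = y!t)" by blast
  next
    assume "\<exists>s<d. x!s \<noteq> y!s \<and> (\<forall>t<d. t \<noteq> s \<longrightarrow> x!t = y!t)"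
    then obtain s where "s<d" "x!s \<noteq> y!s" "\<forall>t<d. t \<noteq> s \<longrightarrow> x!t = y!t" by blast
    then have "{i. i < d \<and> x ! i \<noteq> y ! i} = {s}" by blast
    then show "card {i. i < d \<and> x ! i \<noteq> y ! i} = 1" by simp
  qed
  then show ?thesis unfolding hamming_adj_def by auto
qed

lemma adj_card: "hamming_adj d 3 x y \<Longrightarrow> card (Dif d x y) = 1"
  unfolding hamming_adj_def Dif_def by auto

lemma adj_sym: "hamming_adj d 3 x y \<Longrightarrow> hamming_adj d 3 y x"
  unfolding adj_iff by metis

lemma adj_V: "hamming_adj d 3 x y \<Longrightarrow> x \<in> hamming_vertices d 3 \<and> y \<in> hamming_vertices d 3"
  unfolding adj_iff by auto

lemma adj_irrefl: "\<not> hamming_adj d 3 x x"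
  unfolding adj_iff by auto

lemma vert_eq: "x \<in> hamming_vertices d 3 \<Longrightarrow> y \<in> hamming_vertices d 3 \<Longrightarrow> (\<forall>t<d. x!t = y!t) \<Longrightarrow> x = y"
  unfolding vert_iff by (metis nth_equalityI)

lemma upd_V: "x \<in> hamming_vertices d 3 \<Longrightarrow> 1 \<le> v \<Longrightarrow> v \<le> 3 \<Longrightarrow> x[s:=v] \<in> hamming_vertices d 3"
  unfolding vert_iff by (metis length_list_update nth_list_update_eq nth_list_update_neq)

definition third :: "nat \<Rightarrow> nat \<Rightarrow> nat" where "third a b = 6 - a - b"

lemma third_props:
  assumes "1 \<le> a" "a \<le> 3" "1 \<le> b" "b \<le> 3" "a \<noteq> b"
  shows "1 \<le> third a b \<and> third a b \<le> 3 \<and> third a b \<noteq> a \<and> third a b \<noteq> b"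
proof -
  have "a=1 \<or> a=2 \<or> a=3" "b=1 \<or> b=2 \<or> b=3" using assms by auto
  then show ?thesis using assms by (auto simp: third_def)
qed

lemma third_uniq:
  assumes "1 \<le> a" "a \<le> 3" "1 \<le> b" "b \<le> 3" "1 \<le> c" "c \<le> 3" "a \<noteq> b" "c \<noteq> a" "c \<noteq> b"
  shows "c = third a b"
proof -
  have "a=1 \<or> a=2 \<or> a=3" "b=1 \<or> b=2 \<or> b=3" "c=1 \<or> c=2 \<or> c=3" using assms by auto
  then show ?thesis using assms by (auto simp: third_def)
qed


abbreviation "VV d \<equiv> hamming_vertices d 3"
abbreviation "EE d \<equiv> hamming_adj d 3"

lemma vlen: "x \<in> VV d \<Longrightarrow> length x = d" by (simp add: vert_iff)
lemma vrange: "x \<in> VV d \<Longrightarrow> t < d \<Longrightarrow> 1 \<le> x!t \<and> x!t \<le> 3" by (simp add: vert_iff)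

lemma cn_exists:
  assumes "EE d x z" shows "\<exists>r. EE d x r \<and> EE d r z"
proof -
  obtain s where s: "s<d" "x!s \<noteq> z!s" "\<forall>t<d. t\<noteq>s \<longrightarrow> x!t = z!t" and V: "x \<in> VV d" "z \<in> VV d"
    using assms adj_iff by blast
  define r where "r = x[s := third (x!s) (z!s)]"
  have th: "1 \<le> third (x!s) (z!s) \<and> third (x!s) (z!s) \<le> 3 \<and> third (x!s) (z!s) \<noteq> x!s \<and> third (x!s) (z!s) \<noteq> z!s"
    using third_props vrange[OF V(1) s(1)] vrange[OF V(2) s(1)] s(2) by blast
  have rV: "r \<in> VV d" unfolding r_def using upd_V V th by blast
  have lx: "length x = d" using vlen V by blast
  have "EE d x r" unfolding adj_iff using V rV s th lx by (auto simp: r_def nth_list_update)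
  moreover have "EE d r z" unfolding adj_iff using V rV s th lx by (auto simp: r_def nth_list_update)
  ultimately show ?thesis by blast
qed

lemma cn_char:
  assumes s: "s<d" "x!s \<noteq> z!s" "\<forall>t<d. t\<noteq>s \<longrightarrow> x!t = z!t"
    and xp: "EE d x p" and pz: "EE d p z"
  shows "(\<forall>t<d. t\<noteq>s \<longrightarrow> p!t = x!t) \<and> p!s \<noteq> x!s \<and> p!s \<noteq> z!s"
proof -
  obtain c where c: "c<d" "x!c \<noteq> p!c" "\<forall>t<d. t\<noteq>c \<longrightarrow> x!t = p!t" using xp adj_iff by blast
  obtain c' where c': "c'<d" "p!c' \<noteq> z!c'" "\<forall>t<d. t\<noteq>c' \<longrightarrow> p!t = z!t" using pz adj_iff by blast
  have "c = s"
  proof (rule ccontr)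
    assume "c \<noteq> s"
    then have "x!c = z!c" using s c by auto
    then have "c = c'" using c c' by metis
    then show False using s c c' \<open>c \<noteq> s\<close> by metis
  qed
  moreover have "p!s \<noteq> z!s"
  proof
    assume "p!s = z!s"
    then have "\<forall>t<d. p!t = z!t" using c s \<open>c = s\<close> by metis
    then show False using c' by blast
  qed
  ultimately show ?thesis using c by metis
qed

lemma cn_unique:
  assumes "EE d x z" "EE d x r" "EE d r z" "EE d x p" "EE d p z"
  shows "p = r"
proof -
  obtain s where s: "s<d" "x!s \<noteq> z!s" "\<forall>t<d. t\<noteq>s \<longrightarrow> x!t = z!t" and V: "x \<in> VV d" "z \<in> VV d"
    using assms(1) adj_iff by blast
  have pV: "p \<in> VV d" and rV: "r \<in> VV d" using assms adj_V by blast+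
  note A = cn_char[OF s assms(4,5)] and B = cn_char[OF s assms(2,3)]
  have "p!s = third (x!s) (z!s)"
    using third_uniq vrange[OF V(1) s(1)] vrange[OF V(2) s(1)] vrange[OF pV s(1)] s(2) A by blast
  moreover have "r!s = third (x!s) (z!s)"
    using third_uniq vrange[OF V(1) s(1)] vrange[OF V(2) s(1)] vrange[OF rV s(1)] s(2) B by blast
  ultimately have "\<forall>t<d. p!t = r!t" using A B by metis
  then show ?thesis using vert_eq pV rV by blast
qed

lemma cn2:
  assumes V: "x \<in> VV d" "y \<in> VV d" and st: "s<d" "t<d" "s\<noteq>t" "x!s \<noteq> y!s" "x!t \<noteq> y!t"
    "\<forall>r<d. r\<noteq>s \<and> r\<noteq>t \<longrightarrow> x!r = y!r"
    and xz: "EE d x z" and zy: "EE d z y"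
  shows "z = x[s:=y!s] \<or> z = x[t:=y!t]"
proof -
  obtain c where c: "c<d" "x!c \<noteq> z!c" "\<forall>r<d. r\<noteq>c \<longrightarrow> x!r = z!r" using xz adj_iff by blast
  obtain c' where c': "c'<d" "z!c' \<noteq> y!c'" "\<forall>r<d. r\<noteq>c' \<longrightarrow> z!r = y!r" using zy adj_iff by blast
  have zV: "z \<in> VV d" using xz adj_V by blast
  have lx: "length x = d" using vlen V by blast
  have hs: "s = c \<or> s = c'" using st c c' by metis
  have ht: "t = c \<or> t = c'" using st c c' by metis
  show ?thesis
  proof (cases "c = s")
    case True
    then have "c' = t" using hs ht st by metis
    have "\<forall>r<d. z!r = x[s:=y!s]!r" using c c' True \<open>c' = t\<close> st lx by (auto simp: nth_list_update)
    then show ?thesis using vert_eq[OF zV upd_V[OF V(1)]] vrange[OF V(2) st(1)] by blast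
  next
    case False
    then have "c = t" "c' = s" using hs ht st by metis+
    have "\<forall>r<d. z!r = x[t:=y!t]!r" using c c' \<open>c = t\<close> \<open>c' = s\<close> st lx by (auto simp: nth_list_update)
    then show ?thesis using vert_eq[OF zV upd_V[OF V(1)]] vrange[OF V(2) st(2)] by blast
  qed
qed

lemma cn2_nbr:
  assumes V: "x \<in> VV d" "y \<in> VV d" and st: "s<d" "t<d" "s\<noteq>t" "x!s \<noteq> y!s" "x!t \<noteq> y!t"
    "\<forall>r<d. r\<noteq>s \<and> r\<noteq>t \<longrightarrow> x!r = y!r"
  shows "EE d x (x[s:=y!s]) \<and> EE d (x[s:=y!s]) y \<and> x[s:=y!s] \<in> VV d"
proof -
  have lx: "length x = d" using vlen V by blast
  have wV: "x[s:=y!s] \<in> VV d" using upd_V[OF V(1)] vrange[OF V(2) st(1)] by blast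
  have "EE d x (x[s:=y!s])" unfolding adj_iff using V wV st lx by (auto simp: nth_list_update)
  moreover have "EE d (x[s:=y!s]) y" unfolding adj_iff using V wV st lx
    apply (simp add: nth_list_update)
    apply (rule exI[of _ t]) by auto
  ultimately show ?thesis using wV by blast
qed


lemma nbr_pair:
  assumes a1: "EE d q1 l" and a2: "EE d q2 l" and ne: "q1 \<noteq> q2" and na: "\<not> EE d q1 q2"
  shows "\<exists>w\<in>VV d. w \<noteq> l \<and> EE d q1 w \<and> EE d w q2 \<and> (\<forall>y. EE d q1 y \<and> EE d y q2 \<longrightarrow> y = l \<or> y = w)"
proof -
  obtain c1 where c1: "c1<d" "q1!c1 \<noteq> l!c1" "\<forall>r<d. r\<noteq>c1 \<longrightarrow> q1!r = l!r" using a1 adj_iff by blast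
  obtain c2 where c2: "c2<d" "q2!c2 \<noteq> l!c2" "\<forall>r<d. r\<noteq>c2 \<longrightarrow> q2!r = l!r" using a2 adj_iff by blast
  have V: "q1 \<in> VV d" "q2 \<in> VV d" "l \<in> VV d" using a1 a2 adj_V by blast+
  have "c1 \<noteq> c2"
  proof
    assume eq: "c1 = c2"
    show False
    proof (cases "q1!c1 = q2!c1")
      case True
      then have "\<forall>r<d. q1!r = q2!r" using c1 c2 eq by metis
      then show False using vert_eq V ne by blast
    next
      case False
      then have "EE d q1 q2" unfolding adj_iff using V c1 c2 eq by metis
      then show False using na by blast
    qed
  qed
  have h1: "q1!c1 \<noteq> q2!c1" using c1 c2 \<open>c1 \<noteq> c2\<close> by metis
  have h2: "q1!c2 \<noteq> q2!c2" using c1 c2 \<open>c1 \<noteq> c2\<close> by metis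
  have h3: "\<forall>r<d. r\<noteq>c1 \<and> r\<noteq>c2 \<longrightarrow> q1!r = q2!r" using c1 c2 by metis
  have lx: "length q1 = d" using vlen V by blast
  have "l = q1[c1:=q2!c1]"
  proof -
    have "\<forall>r<d. l!r = q1[c1:=q2!c1]!r" using c1 c2 \<open>c1 \<noteq> c2\<close> lx by (auto simp: nth_list_update)
    then show ?thesis using vert_eq[OF V(3) upd_V[OF V(1)]] vrange[OF V(2) c1(1)] by blast
  qed
  define w where "w = q1[c2:=q2!c2]"
  have wn: "EE d q1 w \<and> EE d w q2 \<and> w \<in> VV d"
    unfolding w_def using cn2_nbr[OF V(1,2) c2(1) c1(1) _ h2 h1] h3 \<open>c1 \<noteq> c2\<close> by metis
  have "w \<noteq> l" using \<open>l = q1[c1:=q2!c1]\<close> w_def c1 \<open>c1 \<noteq> c2\<close> lx by (metis nth_list_update_neq)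
  moreover have "\<forall>y. EE d q1 y \<and> EE d y q2 \<longrightarrow> y = l \<or> y = w"
    using cn2[OF V(1,2) c1(1) c2(1) \<open>c1 \<noteq> c2\<close> h1 h2 h3] \<open>l = q1[c1:=q2!c1]\<close> w_def by blast
  ultimately show ?thesis using wn by blast
qed

lemma Dif_finite: "finite (Dif d x y)" unfolding Dif_def by simp

lemma step_geom:
  assumes V: "i \<in> VV d" "k \<in> VV d" and m2: "2 \<le> card (Dif d i k)"
  shows "\<exists>p1 p2 v. p1 \<in> VV d \<and> p2 \<in> VV d \<and> v \<in> VV d \<and>
     card (Dif d i p1) < card (Dif d i k) \<and> card (Dif d i p2) < card (Dif d i k) \<and>
     card (Dif d i v) < card (Dif d i k) \<and> EE d k p1 \<and> EE d k p2 \<and> EE d v p1 \<and> EE d v p2 \<and>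
     p1 \<noteq> p2 \<and> \<not> EE d p1 p2 \<and> v \<noteq> k \<and> (\<forall>x. EE d p1 x \<and> EE d x p2 \<longrightarrow> x = k \<or> x = v)"
proof -
  obtain s t where st: "s \<in> Dif d i k" "t \<in> Dif d i k" "s \<noteq> t"
  proof -
    have "Dif d i k \<noteq> {}" using m2 by auto
    then obtain s where s: "s \<in> Dif d i k" by blast
    have "card (Dif d i k - {s}) \<ge> 1" using m2 s Dif_finite by (simp add: card_Diff_singleton)
    then have "Dif d i k - {s} \<noteq> {}" by (metis card.empty not_one_le_zero)
    then obtain t where "t \<in> Dif d i k - {s}" by blast
    then show ?thesis using that s by blast
  qed
  have sd: "s<d" "i!s \<noteq> k!s" "t<d" "i!t \<noteq> k!t" using st unfolding Dif_def by auto
  have lk: "length k = d" using vlen V by blast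
  define p1 where "p1 = k[s := i!s]"
  define p2 where "p2 = k[t := i!t]"
  define v where "v = p1[t := i!t]"
  have p1V: "p1 \<in> VV d" unfolding p1_def using upd_V V vrange sd by blast
  have p2V: "p2 \<in> VV d" unfolding p2_def using upd_V V vrange sd by blast
  have vV: "v \<in> VV d" unfolding v_def using upd_V p1V V vrange sd by blast
  have D1: "Dif d i p1 = Dif d i k - {s}" unfolding Dif_def p1_def using lk sd by (auto simp: nth_list_update)
  have D2: "Dif d i p2 = Dif d i k - {t}" unfolding Dif_def p2_def using lk sd by (auto simp: nth_list_update)
  have D3: "Dif d i v \<subset> Dif d i k" unfolding Dif_def v_def p1_def using lk sd st(3) by (auto simp: nth_list_update)
  have c1: "card (Dif d i p1) < card (Dif d i k)" using D1 st Dif_finite m2 by (simp add: card_Diff1_less)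
  have c2: "card (Dif d i p2) < card (Dif d i k)" using D2 st Dif_finite m2 by (simp add: card_Diff1_less)
  have c3: "card (Dif d i v) < card (Dif d i k)" using D3 Dif_finite by (simp add: psubset_card_mono)
  have e1: "EE d k p1" unfolding adj_iff using V p1V sd lk
    by (auto simp: p1_def nth_list_update intro!: exI[of _ s])
  have e2: "EE d k p2" unfolding adj_iff using V p2V sd lk
    by (auto simp: p2_def nth_list_update intro!: exI[of _ t])
  have e3: "EE d v p1"
  proof -
    have "v!t = i!t" "p1!t = k!t" "\<forall>r. r\<noteq>t \<longrightarrow> v!r = p1!r"
      using sd lk st(3) unfolding v_def p1_def by auto
    then show ?thesis unfolding adj_iff using vV p1V sd by metis
  qed
  have e4: "EE d v p2" unfolding adj_iff using vV p2V sd lk st(3)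
    by (auto simp: v_def p1_def p2_def nth_list_update intro!: exI[of _ s])
  have ne: "p1 \<noteq> p2" using sd st(3) lk unfolding p1_def p2_def by (metis nth_list_update_eq nth_list_update_neq)
  have h1: "p1!s \<noteq> p2!s" "p1!t \<noteq> p2!t" "\<forall>r<d. r\<noteq>s \<and> r\<noteq>t \<longrightarrow> p1!r = p2!r"
    using sd st(3) lk unfolding p1_def p2_def by (auto simp: nth_list_update)
  have na: "\<not> EE d p1 p2"
  proof
    assume "EE d p1 p2"
    then obtain c where "c<d" "p1!c \<noteq> p2!c" "\<forall>r<d. r\<noteq>c \<longrightarrow> p1!r = p2!r" using adj_iff by blast
    then show False using h1 sd st(3) by metis
  qed
  have "v!s = i!s" using sd lk st(3) unfolding v_def p1_def by simp
  then have vk: "v \<noteq> k" using sd by metis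
  have k_eq: "p1[s := p2!s] = k" using sd st(3) lk unfolding p1_def p2_def by (auto simp: nth_list_update)
  have v_eq: "p1[t := p2!t] = v" using sd st(3) lk unfolding v_def p2_def by (auto simp: nth_list_update)
  have "\<forall>x. EE d p1 x \<and> EE d x p2 \<longrightarrow> x = k \<or> x = v"
    using cn2[OF p1V p2V sd(1) sd(3) st(3) h1] k_eq v_eq by metis
  then show ?thesis using p1V p2V vV c1 c2 c3 e1 e2 e3 e4 ne na vk by blast
qed

lemma sep_nbr:
  assumes V: "x \<in> VV d" "y \<in> VV d" and ne: "x \<noteq> y" and na: "\<not> EE d x y"
  shows "\<exists>r. EE d x r \<and> \<not> EE d y r"
proof -
  obtain s where s: "s<d" "x!s \<noteq> y!s" using vert_eq V ne by blast
  define r where "r = x[s := third (x!s) (y!s)]"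
  have th: "1 \<le> third (x!s) (y!s) \<and> third (x!s) (y!s) \<le> 3 \<and> third (x!s) (y!s) \<noteq> x!s \<and> third (x!s) (y!s) \<noteq> y!s"
    using third_props vrange[OF V(1) s(1)] vrange[OF V(2) s(1)] s(2) by blast
  have rV: "r \<in> VV d" unfolding r_def using upd_V V th by blast
  have lx: "length x = d" using vlen V by blast
  have "EE d x r" unfolding adj_iff using V rV s th lx by (auto simp: r_def nth_list_update intro!: exI[of _ s])
  moreover have "\<not> EE d y r"
  proof
    assume "EE d y r"
    then obtain c where c: "c<d" "y!c \<noteq> r!c" "\<forall>t<d. t\<noteq>c \<longrightarrow> y!t = r!t" using adj_iff by blast
    have rs: "r!s = third (x!s) (y!s)" using r_def lx s by simp
    have "c = s" using c rs th s by metis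
    then have "\<forall>t<d. t\<noteq>s \<longrightarrow> y!t = x!t" using c r_def lx by auto
    then have "EE d x y" unfolding adj_iff using V s by metis
    then show False using na by blast
  qed
  ultimately show ?thesis by blast
qed



lemma adj_zero: "adj (0::'a::cstar_algebra) = 0"
proof -
  have "adj (0::'a) = adj (0 + 0)" by simp
  also have "\<dots> = adj 0 + adj 0" by (rule adj_add)
  finally show ?thesis by simp
qed

lemma adj_diff: "adj ((x::'a::cstar_algebra) - y) = adj x - adj y"
proof -
  have "adj x = adj ((x - y) + y)" by simp
  also have "\<dots> = adj (x - y) + adj y" by (rule adj_add)
  finally show ?thesis by (simp add: algebra_simps)
qed

lemma adj_one: "adj (1::'a::cstar_algebra) = 1"
proof -
  have "adj (1::'a) = adj 1 * 1" by simp
  also have "\<dots> = adj 1 * adj (adj 1)" by (simp add: adj_adj)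
  also have "\<dots> = adj (adj 1 * 1)" by (rule adj_mult[of "adj 1" 1, symmetric])
  also have "\<dots> = 1" by (simp add: adj_adj)
  finally show ?thesis .
qed

lemma cstar_zero: "(z::'a::cstar_algebra) * adj z = 0 \<Longrightarrow> z = 0"
proof -
  assume h: "z * adj z = 0"
  have "norm (adj (adj z) * adj z) = (norm (adj z))\<^sup>2" by (rule cstar_identity)
  then have "(norm (adj z))\<^sup>2 = 0" using h by (simp add: adj_adj)
  then have "adj z = 0" by simp
  then have "adj (adj z) = 0" by (simp add: adj_zero)
  then show "z = 0" by (simp add: adj_adj)
qed

definition isproj :: "'a::cstar_algebra \<Rightarrow> bool" where
  "isproj p \<longleftrightarrow> adj p = p \<and> p * p = p"

lemma proj3:
  fixes a b c :: "'a::cstar_algebra"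
  assumes pa: "isproj a" and pb: "isproj b" and pc: "isproj c"
    and h1: "a * b = a * c * b" and h2: "a * c = a * b * c"
  shows "a * b = a * c"
proof -
  have bb: "b * b = b" and cc: "c * c = c" and aa: "adj a = a" and ab: "adj b = b" and ac: "adj c = c"
    using pa pb pc unfolding isproj_def by auto
  have h: "a * b = a * b * c * b" using h1 h2 by simp
  define Z where "Z = a * b * (1 - c)"
  have adjZ: "adj Z = (1 - c) * b * a"
    unfolding Z_def by (simp add: adj_mult adj_diff adj_one aa ab ac mult.assoc)
  have oc: "(1 - c) * (1 - c) = 1 - c" by (simp add: algebra_simps cc)
  have "Z * adj Z = Z * ((1 - c) * b * a)" using adjZ by simp
  also have "\<dots> = a * b * ((1 - c) * (1 - c)) * b * a" by (simp add: Z_def mult.assoc)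
  also have "\<dots> = (a * b * b - a * b * c * b) * a" using oc by (simp add: algebra_simps)
  also have "\<dots> = 0"
  proof -
    have "a * b * b = a * b" using bb by (simp add: mult.assoc)
    moreover have "a * b - a * b * c * b = 0" by (rule iffD2[OF right_minus_eq h])
    ultimately show ?thesis by simp
  qed
  finally have "Z = 0" by (rule cstar_zero)
  then have "a * b = a * b * c" unfolding Z_def by (simp add: algebra_simps cc)
  then show ?thesis using h2 by simp
qed

lemma K3:
  fixes a b c :: "'a::cstar_algebra"
  assumes pa: "isproj a" and pb: "isproj b" and pc: "isproj c"
    and h1: "a * b = a * c" and h2: "b * a = b * c" and h3: "c * a = c * b"
  shows "a * b = b * a"
proof -
  have aa: "adj a = a" and ab: "adj b = b" and ac: "adj c = c"
    using pa pb pc unfolding isproj_def by auto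
  have "a * b = a * c" by (rule h1)
  also have "\<dots> = adj (c * a)" by (simp add: adj_mult aa ac)
  also have "\<dots> = adj (c * b)" by (simp add: h3)
  also have "\<dots> = b * c" by (simp add: adj_mult ab ac)
  also have "\<dots> = b * a" by (simp add: h2)
  finally show ?thesis .
qed

lemma sum_single:
  assumes "finite S" "x \<in> S" "\<forall>y\<in>S. y \<noteq> x \<longrightarrow> f y = 0"
  shows "sum f S = f x"
proof -
  have "sum f S = f x + sum f (S - {x})" using assms by (simp add: sum.remove)
  also have "sum f (S - {x}) = 0" using assms by (intro sum.neutral) auto
  finally show ?thesis by simp
qed

lemma sum_two:
  assumes "finite S" "x \<in> S" "y \<in> S" "x \<noteq> y" "\<forall>z\<in>S. z \<noteq> x \<and> z \<noteq> y \<longrightarrow> f z = 0"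
  shows "sum f S = f x + f y"
proof -
  have "sum f S = sum f {x, y}"
    using assms by (intro sum.mono_neutral_right) auto
  then show ?thesis using assms by simp
qed

lemma finV: "finite (VV d)"
proof -
  have "finite {xs. set xs \<subseteq> {1..3::nat} \<and> length xs = d}" by (rule finite_lists_length_eq) simp
  then show ?thesis unfolding hamming_vertices_def by (simp add: conj_commute)
qed



locale HQ =
  fixes d :: nat and u :: "nat list \<Rightarrow> nat list \<Rightarrow> 'a::cstar_algebra"
  assumes qr: "qaut_rel (VV d) (EE d) u"
begin

lemma isp: "x \<in> VV d \<Longrightarrow> y \<in> VV d \<Longrightarrow> isproj (u x y)"
  using qr unfolding qaut_rel_def isproj_def by blast

lemma rowsum: "x \<in> VV d \<Longrightarrow> (\<Sum>y\<in>VV d. u x y) = 1"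
  using qr unfolding qaut_rel_def by blast

lemma colsum: "y \<in> VV d \<Longrightarrow> (\<Sum>x\<in>VV d. u x y) = 1"
  using qr unfolding qaut_rel_def by blast

lemma R3: "x \<in> VV d \<Longrightarrow> y \<in> VV d \<Longrightarrow> z \<in> VV d \<Longrightarrow> w \<in> VV d \<Longrightarrow> EE d x z \<noteq> EE d y w \<Longrightarrow>
   u x y * u z w = 0"
  using qr unfolding qaut_rel_def by blast

lemma insert_col: "q \<in> VV d \<Longrightarrow> A * B = (\<Sum>p\<in>VV d. A * u p q * B)"
proof -
  assume q: "q \<in> VV d"
  have "A * B = A * (\<Sum>p\<in>VV d. u p q) * B" using colsum[OF q] by simp
  also have "\<dots> = (\<Sum>p\<in>VV d. A * u p q * B)" by (simp add: sum_distrib_left sum_distrib_right)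
  finally show ?thesis .
qed

lemma insert_row: "x \<in> VV d \<Longrightarrow> A * B = (\<Sum>y\<in>VV d. A * u x y * B)"
proof -
  assume x: "x \<in> VV d"
  have "A * B = A * (\<Sum>y\<in>VV d. u x y) * B" using rowsum[OF x] by simp
  also have "\<dots> = (\<Sum>y\<in>VV d. A * u x y * B)" by (simp add: sum_distrib_left sum_distrib_right)
  finally show ?thesis .
qed

lemma pinch: "x1 \<in> VV d \<Longrightarrow> x2 \<in> VV d \<Longrightarrow> X = (\<Sum>q1\<in>VV d. \<Sum>q2\<in>VV d. u x1 q1 * X * u x2 q2)"
proof -
  assume x: "x1 \<in> VV d" "x2 \<in> VV d"
  have "X = (\<Sum>q1\<in>VV d. u x1 q1) * X * (\<Sum>q2\<in>VV d. u x2 q2)" using rowsum x by simp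
  also have "\<dots> = (\<Sum>q1\<in>VV d. \<Sum>q2\<in>VV d. u x1 q1 * X * u x2 q2)"
    by (simp add: sum_distrib_left sum_distrib_right, rule sum.swap)
  finally show ?thesis .
qed

lemma row_orth:
  assumes "x \<in> VV d" "y1 \<in> VV d" "y2 \<in> VV d" "y1 \<noteq> y2"
  shows "u x y1 * u x y2 = 0"
proof (cases "EE d y1 y2")
  case True
  then show ?thesis using R3 assms adj_irrefl by metis
next
  case False
  obtain r where r: "EE d y1 r" "\<not> EE d y2 r" using sep_nbr assms False by blast
  have rV: "r \<in> VV d" using r adj_V by blast
  have "u x y1 * u x y2 = (\<Sum>p\<in>VV d. u x y1 * u p r * u x y2)" using insert_col[OF rV] .
  also have "\<dots> = 0"
  proof (rule sum.neutral, rule ballI)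
    fix p assume p: "p \<in> VV d"
    show "u x y1 * u p r * u x y2 = 0"
    proof (cases "EE d x p")
      case True
      then have "u p r * u x y2 = 0" using R3[OF p rV assms(1,3)] r adj_sym by metis
      then show ?thesis by (simp add: mult.assoc)
    next
      case False
      then have "u x y1 * u p r = 0" using R3[OF assms(1,2) p rV] r by metis
      then show ?thesis by simp
    qed
  qed
  finally show ?thesis .
qed

lemma col_orth:
  assumes "x1 \<in> VV d" "x2 \<in> VV d" "y \<in> VV d" "x1 \<noteq> x2"
  shows "u x1 y * u x2 y = 0"
proof (cases "EE d x1 x2")
  case True
  then show ?thesis using R3 assms adj_irrefl by metis
next
  case False
  obtain r where r: "EE d x1 r" "\<not> EE d x2 r" using sep_nbr assms False by blast
  have rV: "r \<in> VV d" using r adj_V by blast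
  have "u x1 y * u x2 y = (\<Sum>q\<in>VV d. u x1 y * u r q * u x2 y)" using insert_row[OF rV] .
  also have "\<dots> = 0"
  proof (rule sum.neutral, rule ballI)
    fix q assume q: "q \<in> VV d"
    show "u x1 y * u r q * u x2 y = 0"
    proof (cases "EE d y q")
      case True
      then have "u r q * u x2 y = 0" using R3[OF rV q assms(2,3)] r adj_sym by metis
      then show ?thesis by (simp add: mult.assoc)
    next
      case False
      then have "u x1 y * u r q = 0" using R3[OF assms(1,3) rV q] r by metis
      then show ?thesis by simp
    qed
  qed
  finally show ?thesis .
qed

lemma three:
  assumes V: "x \<in> VV d" "y \<in> VV d" "z \<in> VV d" "w \<in> VV d" "r \<in> VV d" "s \<in> VV d"
    and ys: "EE d y s" and sw: "EE d s w" and uq: "\<forall>p. EE d x p \<and> EE d p z \<longrightarrow> p = r"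
  shows "u x y * u z w = u x y * u r s * u z w"
proof -
  have "u x y * u z w = (\<Sum>p\<in>VV d. u x y * u p s * u z w)" using insert_col[OF V(6)] .
  also have "\<dots> = u x y * u r s * u z w"
  proof (rule sum_single[OF finV V(5)], rule ballI, rule impI)
    fix p assume p: "p \<in> VV d" "p \<noteq> r"
    show "u x y * u p s * u z w = 0"
    proof (cases "EE d x p")
      case True
      then have "\<not> EE d p z" using uq p by blast
      then have "u p s * u z w = 0" using R3[OF p(1) V(6) V(3) V(4)] sw by metis
      then show ?thesis by (simp add: mult.assoc)
    next
      case False
      then have "u x y * u p s = 0" using R3[OF V(1) V(2) p(1) V(6)] ys by metis
      then show ?thesis by simp
    qed
  qed
  finally show ?thesis .
qed

lemma uniq_of:
  "EE d x z \<Longrightarrow> EE d x r \<Longrightarrow> EE d r z \<Longrightarrow> \<forall>p. EE d x p \<and> EE d p z \<longrightarrow> p = r"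
  using cn_unique by blast

lemma base:
  assumes ik: "EE d i k" and V: "j \<in> VV d" "l \<in> VV d"
  shows "u i j * u k l = u k l * u i j"
proof -
  have iV: "i \<in> VV d" "k \<in> VV d" using ik adj_V by blast+
  show ?thesis
  proof (cases "EE d j l")
    case False
    then have "u i j * u k l = 0" "u k l * u i j = 0"
      using R3[OF iV(1) V(1) iV(2) V(2)] R3[OF iV(2) V(2) iV(1) V(1)] ik adj_sym by metis+
    then show ?thesis by simp
  next
    case True
    obtain i' where i': "EE d i i'" "EE d i' k" using cn_exists ik by blast
    obtain j' where j': "EE d j j'" "EE d j' l" using cn_exists True by blast
    have i'V: "i' \<in> VV d" and j'V: "j' \<in> VV d" using i' j' adj_V by blast+
    note S = adj_sym
    have ki: "EE d k i" and i'i: "EE d i' i" and ki': "EE d k i'" and lj: "EE d l j"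
      and j'j: "EE d j' j" and lj': "EE d l j'" using ik i' j' True S by blast+
    define a where "a = u i j"
    define b where "b = u k l"
    define c where "c = u i' j'"
    have pa: "isproj a" and pb: "isproj b" and pc: "isproj c"
      unfolding a_def b_def c_def using isp iV V i'V j'V by blast+
    have t1: "a * b = a * c * b" unfolding a_def b_def c_def
      by (rule three[OF iV(1) V(1) iV(2) V(2) i'V j'V j'(1) j'(2) uniq_of[OF ik i'(1) i'(2)]])
    have t2: "a * c = a * b * c" unfolding a_def b_def c_def
      by (rule three[OF iV(1) V(1) i'V j'V iV(2) V(2) True lj' uniq_of[OF i'(1) ik ki']])
    have t3: "b * a = b * c * a" unfolding a_def b_def c_def
      by (rule three[OF iV(2) V(2) iV(1) V(1) i'V j'V lj' j'j uniq_of[OF ki ki' i'i]])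
    have t4: "b * c = b * a * c" unfolding a_def b_def c_def
      by (rule three[OF iV(2) V(2) i'V j'V iV(1) V(1) lj j'(1) uniq_of[OF ki' ki i'(1)]])
    have t5: "c * a = c * b * a" unfolding a_def b_def c_def
      by (rule three[OF i'V j'V iV(1) V(1) iV(2) V(2) j'(2) lj uniq_of[OF i'i i'(2) ki]])
    have t6: "c * b = c * a * b" unfolding a_def b_def c_def
      by (rule three[OF i'V j'V iV(2) V(2) iV(1) V(1) j'j True uniq_of[OF i'(2) i'i ik]])
    have "a * b = a * c" by (rule proj3[OF pa pb pc t1 t2])
    moreover have "b * a = b * c" by (rule proj3[OF pb pa pc t3 t4])
    moreover have "c * a = c * b" by (rule proj3[OF pc pa pb t5 t6])
    ultimately have "a * b = b * a" by (rule K3[OF pa pb pc])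
    then show ?thesis unfolding a_def b_def .
  qed
qed


lemma lcomm: "(x::'b::semigroup_mult) * y = y * x \<Longrightarrow> x * (y * z) = y * (x * z)"
  by (metis mult.assoc)

lemma commF: "(x::'b::semigroup_mult) * e1 = e1 * x \<Longrightarrow> x * e2 = e2 * x \<Longrightarrow> x * (e1 * e2) = (e1 * e2) * x"
  by (metis mult.assoc)

lemma step:
  assumes IH: "\<forall>x\<in>VV d. \<forall>z\<in>VV d. card (Dif d x z) < m \<longrightarrow> (\<forall>y\<in>VV d. \<forall>w\<in>VV d. u x y * u z w = u z w * u x y)"
    and iV: "i \<in> VV d" "k \<in> VV d" and m: "card (Dif d i k) = m" "2 \<le> m" and V: "j \<in> VV d" "l \<in> VV d"
  shows "u i j * u k l = u k l * u i j"
proof -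
  obtain p1 p2 v where p1V: "p1 \<in> VV d" and p2V: "p2 \<in> VV d" and vV: "v \<in> VV d"
    and d1: "card (Dif d i p1) < m" and d2: "card (Dif d i p2) < m" and d3: "card (Dif d i v) < m"
    and kp1: "EE d k p1" and kp2: "EE d k p2" and vp1: "EE d v p1" and vp2: "EE d v p2"
    and pne: "p1 \<noteq> p2" and pna: "\<not> EE d p1 p2" and vk: "v \<noteq> k"
    and cnp: "\<forall>x. EE d p1 x \<and> EE d x p2 \<longrightarrow> x = k \<or> x = v"
    using step_geom[OF iV] m by metis
  have adjc: "\<And>x z y w. EE d x z \<Longrightarrow> y \<in> VV d \<Longrightarrow> w \<in> VV d \<Longrightarrow> u x y * u z w = u z w * u x y"
    using base by blast
  have ic: "\<And>x y. x \<in> VV d \<Longrightarrow> card (Dif d i x) < m \<Longrightarrow> y \<in> VV d \<Longrightarrow> u i j * u x y = u x y * u i j"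
    using IH iV V by blast
  define a where "a = u i j"
  define b where "b = u k l"
  have pa: "isproj a" and pb: "isproj b" unfolding a_def b_def using isp iV V by blast+
  have trm: "u p1 q1 * (a * b) * u p2 q2 = u p1 q1 * (b * a) * u p2 q2" if q: "q1 \<in> VV d" "q2 \<in> VV d" for q1 q2
  proof -
    define e1 where "e1 = u p1 q1"
    define e2 where "e2 = u p2 q2"
    define F where "F = e1 * e2"
    have ae1: "a * e1 = e1 * a" unfolding a_def e1_def using ic[OF p1V d1 q(1)] .
    have ae2: "a * e2 = e2 * a" unfolding a_def e2_def using ic[OF p2V d2 q(2)] .
    have be1: "b * e1 = e1 * b" unfolding b_def e1_def using adjc[OF kp1 V(2) q(1)] .
    have be2: "b * e2 = e2 * b" unfolding b_def e2_def using adjc[OF kp2 V(2) q(2)] .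
    have aF: "a * F = F * a" unfolding F_def using commF[OF ae1 ae2] .
    have bF: "b * F = F * b" unfolding F_def using commF[OF be1 be2] .
    have L1: "e1 * (a * b) * e2 = a * b * F"
    proof -
      have "e1 * (a * b) * e2 = e1 * (a * (b * e2))" by (simp add: mult.assoc)
      also have "\<dots> = a * (e1 * (b * e2))" by (rule lcomm[OF ae1[symmetric]])
      also have "\<dots> = a * (b * (e1 * e2))" by (simp only: lcomm[OF be1[symmetric]])
      finally show ?thesis by (simp add: F_def mult.assoc)
    qed
    have L2: "e1 * (b * a) * e2 = b * a * F"
    proof -
      have "e1 * (b * a) * e2 = e1 * (b * (a * e2))" by (simp add: mult.assoc)
      also have "\<dots> = b * (e1 * (a * e2))" by (rule lcomm[OF be1[symmetric]])
      also have "\<dots> = b * (a * (e1 * e2))" by (simp only: lcomm[OF ae1[symmetric]])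
      finally show ?thesis by (simp add: F_def mult.assoc)
    qed
    have p1k: "EE d p1 k" and p2k: "EE d p2 k" using kp1 kp2 adj_sym by blast+
    show ?thesis
    proof (cases "EE d q1 l")
      case False
      have z: "e1 * b = 0" unfolding e1_def b_def using R3[OF p1V q(1) iV(2) V(2)] p1k False by metis
      have z': "b * e1 = 0" using z be1 by simp
      have "e1 * (a * b) * e2 = a * (b * e1) * e2" using L1 by (simp add: F_def mult.assoc)
      then have "e1 * (a * b) * e2 = 0" using z' by simp
      moreover have "e1 * (b * a) * e2 = 0" using z by (simp add: mult.assoc[symmetric])
      ultimately show ?thesis unfolding e1_def e2_def by simp
    next
      case q1l: True
      show ?thesis
      proof (cases "EE d q2 l")
        case False
        have z: "b * e2 = 0" unfolding e2_def b_def using R3[OF iV(2) V(2) p2V q(2)] kp2 False adj_sym by metis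
        have A: "e1 * (a * b) * e2 = 0" using z by (simp add: mult.assoc)
        have "e1 * (b * a) * e2 = e1 * b * (a * e2)" by (simp add: mult.assoc)
        also have "\<dots> = e1 * (b * e2) * a" using ae2 by (simp add: mult.assoc)
        finally have "e1 * (b * a) * e2 = 0" using z by simp
        with A show ?thesis unfolding e1_def e2_def by simp
      next
        case q2l: True
        show ?thesis
        proof (cases "q1 = q2 \<or> EE d q1 q2")
          case True
          have "F = 0"
          proof (cases "q1 = q2")
            case True
            then show ?thesis unfolding F_def e1_def e2_def using col_orth[OF p1V p2V q(2) pne] by simp
          next
            case False
            then have "EE d q1 q2" using \<open>q1 = q2 \<or> EE d q1 q2\<close> by blast
            then show ?thesis unfolding F_def e1_def e2_def using R3[OF p1V q(1) p2V q(2)] pna by metis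
          qed
          then show ?thesis using L1 L2 unfolding e1_def e2_def by simp
        next
          case False
          obtain w where wV: "w \<in> VV d" and wl: "w \<noteq> l" and q1w: "EE d q1 w" and wq2: "EE d w q2"
            and cnq: "\<forall>y. EE d q1 y \<and> EE d y q2 \<longrightarrow> y = l \<or> y = w"
            using nbr_pair[OF q1l q2l] False by metis
          define c where "c = u v w"
          have ac: "a * c = c * a" unfolding a_def c_def using ic[OF vV d3 wV] .
          have ce1: "c * e1 = e1 * c" unfolding c_def e1_def using adjc[OF vp1 wV q(1)] .
          have ce2: "c * e2 = e2 * c" unfolding c_def e2_def using adjc[OF vp2 wV q(2)] .
          have cF: "c * F = F * c" unfolding F_def using commF[OF ce1 ce2] .
          have r1: "F = F * b + F * u k w"
          proof -
            have "F = (\<Sum>y\<in>VV d. e1 * u k y * e2)" unfolding F_def using insert_row[OF iV(2)] .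
            also have "\<dots> = e1 * u k l * e2 + e1 * u k w * e2"
            proof (rule sum_two[OF finV V(2) wV wl[symmetric]], rule ballI, rule impI)
              fix y assume y: "y \<in> VV d" "y \<noteq> l \<and> y \<noteq> w"
              show "e1 * u k y * e2 = 0"
              proof (cases "EE d q1 y")
                case False
                then have "e1 * u k y = 0" unfolding e1_def using R3[OF p1V q(1) iV(2) y(1)] p1k by metis
                then show ?thesis by simp
              next
                case True
                then have "\<not> EE d y q2" using cnq y by blast
                then have "u k y * e2 = 0" unfolding e2_def using R3[OF iV(2) y(1) p2V q(2)] kp2 by metis
                then show ?thesis by (simp add: mult.assoc)
              qed
            qed
            also have "\<dots> = F * b + F * u k w"
            proof -
              have "e1 * u k l * e2 = F * b" unfolding F_def b_def
                using adjc[OF kp2 V(2) q(2)] unfolding e2_def by (simp add: mult.assoc)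
              moreover have "e1 * u k w * e2 = F * u k w" unfolding F_def
                using adjc[OF kp2 wV q(2)] unfolding e2_def by (simp add: mult.assoc)
              ultimately show ?thesis by simp
            qed
            finally show ?thesis .
          qed
          have r2: "F = F * u k w + F * c"
          proof -
            have "F = (\<Sum>x\<in>VV d. e1 * u x w * e2)" unfolding F_def using insert_col[OF wV] .
            also have "\<dots> = e1 * u k w * e2 + e1 * u v w * e2"
            proof (rule sum_two[OF finV iV(2) vV vk[symmetric]], rule ballI, rule impI)
              fix x assume x: "x \<in> VV d" "x \<noteq> k \<and> x \<noteq> v"
              show "e1 * u x w * e2 = 0"
              proof (cases "EE d p1 x")
                case False
                then have "e1 * u x w = 0" unfolding e1_def using R3[OF p1V q(1) x(1) wV] q1w by metis
                then show ?thesis by simp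
              next
                case True
                then have "\<not> EE d x p2" using cnp x by blast
                then have "u x w * e2 = 0" unfolding e2_def using R3[OF x(1) wV p2V q(2)] wq2 by metis
                then show ?thesis by (simp add: mult.assoc)
              qed
            qed
            also have "\<dots> = F * u k w + F * c"
            proof -
              have "e1 * u k w * e2 = F * u k w" unfolding F_def
                using adjc[OF kp2 wV q(2)] unfolding e2_def by (simp add: mult.assoc)
              moreover have "e1 * u v w * e2 = F * c" unfolding F_def c_def
                using adjc[OF vp2 wV q(2)] unfolding e2_def by (simp add: mult.assoc)
              ultimately show ?thesis by simp
            qed
            finally show ?thesis .
          qed
          have Fbc: "F * b = F * c" using r1 r2 by (metis add_left_cancel add.commute)
          have "a * b * F = a * (F * b)" using bF by (simp add: mult.assoc)
          also have "\<dots> = a * (c * F)" using Fbc cF by simp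
          also have "\<dots> = c * (a * F)" using ac by (simp add: mult.assoc[symmetric])
          also have "\<dots> = (F * c) * a" using aF cF by (simp add: mult.assoc[symmetric])
          also have "\<dots> = (b * F) * a" using Fbc bF by simp
          also have "\<dots> = b * a * F" using aF by (simp add: mult.assoc)
          finally have "a * b * F = b * a * F" .
          then show ?thesis using L1 L2 unfolding e1_def e2_def by simp
        qed
      qed
    qed
  qed
  have "a * b = (\<Sum>q1\<in>VV d. \<Sum>q2\<in>VV d. u p1 q1 * (a * b) * u p2 q2)" by (rule pinch[OF p1V p2V])
  also have "\<dots> = (\<Sum>q1\<in>VV d. \<Sum>q2\<in>VV d. u p1 q1 * (b * a) * u p2 q2)"
    using trm by (intro sum.cong refl) auto
  also have "\<dots> = b * a" by (rule pinch[OF p1V p2V, symmetric])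
  finally show ?thesis unfolding a_def b_def .
qed

lemma allcomm:
  "\<forall>x\<in>VV d. \<forall>z\<in>VV d. card (Dif d x z) = m \<longrightarrow> (\<forall>y\<in>VV d. \<forall>w\<in>VV d. u x y * u z w = u z w * u x y)"
proof (induction m rule: less_induct)
  case (less m)
  show ?case
  proof (intro ballI impI)
    fix x z y w assume xz: "x \<in> VV d" "z \<in> VV d" and cm: "card (Dif d x z) = m" and yw: "y \<in> VV d" "w \<in> VV d"
    show "u x y * u z w = u z w * u x y"
    proof (cases "m = 0")
      case True
      then have "Dif d x z = {}" using cm Dif_finite by (metis card_0_eq)
      then have "\<forall>t<d. x!t = z!t" unfolding Dif_def by blast
      then have "x = z" using vert_eq xz by blast
      show ?thesis
      proof (cases "y = w")
        case True then show ?thesis using \<open>x = z\<close> by simp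
      next
        case False
        then show ?thesis using row_orth[OF xz(1) yw(1) yw(2)] row_orth[OF xz(1) yw(2) yw(1)] \<open>x = z\<close> by simp
      qed
    next
      case m0: False
      show ?thesis
      proof (cases "m = 1")
        case True
        then have "EE d x z" unfolding hamming_adj_def using xz cm Dif_def by auto
        then show ?thesis using base yw by blast
      next
        case False
        then have "2 \<le> m" using m0 by linarith
        have IH: "\<forall>x\<in>VV d. \<forall>z\<in>VV d. card (Dif d x z) < m \<longrightarrow> (\<forall>y\<in>VV d. \<forall>w\<in>VV d. u x y * u z w = u z w * u x y)"
          using less.IH by blast
        show ?thesis by (rule step[OF IH xz cm \<open>2 \<le> m\<close> yw])
      qed
    qed
  qed
qed

end

theorem theorem4p5:
  fixes d :: nat
    and u :: "nat list \<Rightarrow> nat list \<Rightarrow> 'a::cstar_algebra"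
  assumes "qaut_rel (hamming_vertices d 3) (hamming_adj d 3) u"
  shows "\<forall>i\<in>hamming_vertices d 3. \<forall>j\<in>hamming_vertices d 3.
         \<forall>k\<in>hamming_vertices d 3. \<forall>l\<in>hamming_vertices d 3.
           u i j * u k l = u k l * u i j"
proof -
  interpret HQ d u using assms by unfold_locales
  show ?thesis using allcomm by blast
qed

end
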